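(* Every topological space $X$ is $\Gamma$-embedded in $\mathcal{K}(X)$, the hyperspace of all nonempty compact subsets of $X$ with the Vietoris topology; namely via the embedding $c\colon X\to\mathcal K(X)$, $x\mapsto\{x\}$, and the semigroup homomorphism $\sigma\colon\Gamma(X)\to\Gamma(\mathcal K(X))$ given by $\sigma(1_\emptyset)=1_\emptyset$ and, for $f$ with nonempty domain, $\sigma(f)\colon \mathrm{dom}(f)^+\to\mathrm{im}(f)^+$, $A\mapsto f(A)$.
   Context: The Vietoris topology on $\mathcal K(X)$ has subbasis the sets $V^-=\{A\in\mathcal K(X): A\cap V\ne\emptyset\}$ and $V^+=\{A\in\mathcal K(X): A\subset V\}$ for $V\subset X$ nonempty open. For a topological space $X$, $\Gamma(X)$ is the inverse monoid of homeomorphisms between open subsets of $X$ (including the empty map $1_\emptyset$), with product $\psi\circ\phi\colon \phi^{-1}(\mathrm{dom}(\psi)\cap\mathrm{im}(\phi))\to\psi(\mathrm{dom}(\psi)\cap\mathrm{im}(\phi))$. Let $\Gamma(X)*X=\{(f,x)\in\Gamma(X)\times X: x\in\mathrm{dom}(f)\}$. $X$ is $\Gamma$-embedded in a space $Z$ if there exist a semigroup homomorphism $\sigma\colon\Gamma(X)\to\Gamma(Z)$ and a topological embedding $c\colon X\to Z$ such that for every $(f,x)\in\Gamma(X)*X$ one has $c(x)\in\mathrm{dom}(\sigma(f))$ and $\sigma(f)(c(x))=c(f(x))$. *)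

theory Defs
  imports "HOL-Analysis.Analysis"
begin

definition Kset :: "'a topology \<Rightarrow> 'a set set" where
  "Kset X = {A. compactin X A \<and> A \<noteq> {}}"

definition vietoris_subbasis :: "'a topology \<Rightarrow> 'a set set set" where
  "vietoris_subbasis X =
     {{A \<in> Kset X. A \<inter> V \<noteq> {}} | V. openin X V \<and> V \<noteq> {}} \<union>
     {{A \<in> Kset X. A \<subseteq> V} | V. openin X V \<and> V \<noteq> {}}"

definition vietoris :: "'a topology \<Rightarrow> 'a set topology" where
  "vietoris X = topology_generated_by (vietoris_subbasis X)"

text \<open>Partial maps are represented as maps 'a => 'a option; the domain is dom f,
  the image is ran f, and the product of the inverse monoid is map composition.\<close>
definition Gamma :: "'a topology \<Rightarrow> ('a \<rightharpoonup> 'a) set" where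
  "Gamma X = {f. openin X (dom f) \<and> openin X (ran f) \<and>
      homeomorphic_map (subtopology X (dom f)) (subtopology X (ran f)) (\<lambda>x. the (f x))}"

definition semigroup_hom :: "'a topology \<Rightarrow> 'b topology \<Rightarrow> (('a \<rightharpoonup> 'a) \<Rightarrow> ('b \<rightharpoonup> 'b)) \<Rightarrow> bool" where
  "semigroup_hom X Z \<sigma> \<longleftrightarrow> (\<forall>f\<in>Gamma X. \<sigma> f \<in> Gamma Z) \<and>
     (\<forall>\<psi>\<in>Gamma X. \<forall>\<phi>\<in>Gamma X. \<sigma> (\<psi> \<circ>\<^sub>m \<phi>) = \<sigma> \<psi> \<circ>\<^sub>m \<sigma> \<phi>)"

definition Gamma_embedding_via ::
  "'a topology \<Rightarrow> 'b topology \<Rightarrow> (('a \<rightharpoonup> 'a) \<Rightarrow> ('b \<rightharpoonup> 'b)) \<Rightarrow> ('a \<Rightarrow> 'b) \<Rightarrow> bool" where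
  "Gamma_embedding_via X Z \<sigma> c \<longleftrightarrow> semigroup_hom X Z \<sigma> \<and> embedding_map X Z c \<and>
     (\<forall>f\<in>Gamma X. \<forall>x\<in>dom f. c x \<in> dom (\<sigma> f) \<and> \<sigma> f (c x) = Some (c (the (f x))))"

definition Gamma_embedded :: "'a topology \<Rightarrow> 'b topology \<Rightarrow> bool" where
  "Gamma_embedded X Z \<longleftrightarrow> (\<exists>\<sigma> c. Gamma_embedding_via X Z \<sigma> c)"

definition hyper_sigma :: "'a topology \<Rightarrow> ('a \<rightharpoonup> 'a) \<Rightarrow> ('a set \<rightharpoonup> 'a set)" where
  "hyper_sigma X f = (if f = Map.empty then Map.empty
      else (\<lambda>A. if A \<in> Kset X \<and> A \<subseteq> dom f then Some ((\<lambda>x. the (f x)) ` A) else None))"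

end

theory Submission
  imports Defs
begin

definition plusK :: "'a topology \<Rightarrow> 'a set \<Rightarrow> 'a set set" where
  "plusK X U = {A \<in> Kset X. A \<subseteq> U}"

definition minusK :: "'a topology \<Rightarrow> 'a set \<Rightarrow> 'a set set" where
  "minusK X U = {A \<in> Kset X. A \<inter> U \<noteq> {}}"

lemma Kset_sub: "A \<in> Kset X \<Longrightarrow> A \<subseteq> topspace X"
  by (auto simp: Kset_def dest: compactin_subset_topspace)

lemma topspace_vietoris: "topspace (vietoris X) = Kset X"
proof
  show "topspace (vietoris X) \<subseteq> Kset X"
    unfolding vietoris_def vietoris_subbasis_def by auto
  show "Kset X \<subseteq> topspace (vietoris X)"
  proof
    fix A assume A: "A \<in> Kset X"
    have "A \<noteq> {}" using A by (simp add: Kset_def)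
    then have ne: "topspace X \<noteq> {}" using Kset_sub[OF A] by blast
    have "{B \<in> Kset X. B \<subseteq> topspace X} \<in> vietoris_subbasis X"
      unfolding vietoris_subbasis_def using ne by blast
    moreover have "A \<in> {B \<in> Kset X. B \<subseteq> topspace X}" using A Kset_sub[OF A] by simp
    ultimately show "A \<in> topspace (vietoris X)"
      unfolding vietoris_def topology_generated_by_topspace by blast
  qed
qed

lemma openin_plusK: "openin X U \<Longrightarrow> openin (vietoris X) (plusK X U)"
proof (cases "U = {}")
  case True
  then have "plusK X U = {}" by (auto simp: plusK_def Kset_def)
  then show ?thesis by simp
next
  case False
  assume "openin X U"
  then have "plusK X U \<in> vietoris_subbasis X"
    unfolding vietoris_subbasis_def plusK_def using False by blast
  then show ?thesis unfolding vietoris_def by (rule topology_generated_by_Basis)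
qed

lemma openin_minusK: "openin X U \<Longrightarrow> openin (vietoris X) (minusK X U)"
proof (cases "U = {}")
  case True
  then have "minusK X U = {}" by (auto simp: minusK_def)
  then show ?thesis by simp
next
  case False
  assume "openin X U"
  then have "minusK X U \<in> vietoris_subbasis X"
    unfolding vietoris_subbasis_def minusK_def using False by blast
  then show ?thesis unfolding vietoris_def by (rule topology_generated_by_Basis)
qed

lemma subbasis_cases:
  assumes "s \<in> vietoris_subbasis X"
  obtains W where "openin X W" "s = minusK X W" | W where "openin X W" "s = plusK X W"
  using assms unfolding vietoris_subbasis_def minusK_def plusK_def by blast

lemma img_Kset:
  assumes "continuous_map (subtopology X U) (subtopology X V) h" "A \<in> Kset X" "A \<subseteq> U"
  shows "h ` A \<in> Kset X" "h ` A \<subseteq> V"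
proof -
  have "compactin (subtopology X U) A" using assms by (simp add: Kset_def compactin_subtopology)
  then have "compactin (subtopology X V) (h ` A)" using assms(1) by (rule image_compactin)
  then show "h ` A \<in> Kset X" "h ` A \<subseteq> V" using assms(2) by (auto simp: Kset_def compactin_subtopology)
qed

lemma hyp_cont:
  assumes U: "openin X U" and V: "openin X V"
    and h: "continuous_map (subtopology X U) (subtopology X V) h"
  shows "continuous_map (subtopology (vietoris X) (plusK X U)) (subtopology (vietoris X) (plusK X V)) (image h)"
proof -
  have tsU: "topspace (subtopology (vietoris X) (plusK X U)) = plusK X U"
    by (auto simp: topspace_vietoris plusK_def)
  define W' where "W' W = {x \<in> U. h x \<in> W}" for W
  have W'o: "openin X (W' W)" if "openin X W" for W
  proof -
    have "openin (subtopology X U) {x \<in> topspace (subtopology X U). h x \<in> W \<inter> V}"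
    proof -
      have "openin (subtopology X V) (W \<inter> V)" using that openin_subtopology by blast
      then show ?thesis using h unfolding continuous_map_def by blast
    qed
    moreover have "{x \<in> topspace (subtopology X U). h x \<in> W \<inter> V} = W' W"
      using h U openin_subset[OF U] unfolding W'_def continuous_map_def by auto
    ultimately show ?thesis using U openin_trans_full by metis
  qed
  have "continuous_map (subtopology (vietoris X) (plusK X U)) (vietoris X) (image h)"
    unfolding vietoris_def
  proof (rule continuous_on_generated_topo)
    fix s assume "s \<in> vietoris_subbasis X"
    then show "openin (subtopology (topology_generated_by (vietoris_subbasis X)) (plusK X U))
         (image h -` s \<inter> topspace (subtopology (topology_generated_by (vietoris_subbasis X)) (plusK X U)))"
    proof (cases rule: subbasis_cases)
      case (1 W)
      have "image h -` s \<inter> plusK X U = minusK X (W' W) \<inter> plusK X U"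
        using 1 img_Kset[OF h] by (auto simp: W'_def minusK_def plusK_def)
      moreover have "openin (vietoris X) (minusK X (W' W))" using W'o 1 openin_minusK by blast
      ultimately show ?thesis using tsU unfolding vietoris_def
        by (metis openin_subtopology)
    next
      case (2 W)
      have "image h -` s \<inter> plusK X U = plusK X (W' W) \<inter> plusK X U"
        using 2 img_Kset[OF h] by (auto simp: W'_def plusK_def)
      moreover have "openin (vietoris X) (plusK X (W' W))" using W'o 2 openin_plusK by blast
      ultimately show ?thesis using tsU unfolding vietoris_def
        by (metis openin_subtopology)
    qed
  next
    show "image h ` topspace (subtopology (topology_generated_by (vietoris_subbasis X)) (plusK X U))
       \<subseteq> \<Union> (vietoris_subbasis X)"
      using tsU img_Kset[OF h] topspace_vietoris[of X] unfolding vietoris_def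
      by (auto simp: plusK_def)
  qed
  moreover have "image h \<in> plusK X U \<rightarrow> plusK X V"
    using img_Kset[OF h] by (auto simp: plusK_def)
  ultimately show ?thesis using tsU by (simp add: continuous_map_in_subtopology)
qed

lemma hs_apply:
  "hyper_sigma X f A = (if f = Map.empty then None else
     if A \<in> Kset X \<and> A \<subseteq> dom f then Some ((\<lambda>x. the (f x)) ` A) else None)"
  by (simp add: hyper_sigma_def)

lemma Gamma_cont:
  assumes "f \<in> Gamma X"
  shows "continuous_map (subtopology X (dom f)) (subtopology X (ran f)) (\<lambda>x. the (f x))"
  using assms unfolding Gamma_def by (blast intro: homeomorphic_imp_continuous_map)

lemma Gamma_empty: "Map.empty \<in> Gamma Y"
  unfolding Gamma_def homeomorphic_map_maps homeomorphic_maps_def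
  by (auto simp: continuous_map_def)

lemma sigma_Gamma:
  assumes f: "f \<in> Gamma X"
  shows "hyper_sigma X f \<in> Gamma (vietoris X)"
proof (cases "f = Map.empty")
  case True
  then show ?thesis by (simp add: hyper_sigma_def Gamma_empty)
next
  case False
  define h where "h = (\<lambda>x. the (f x))"
  define D where "D = dom f"
  define R where "R = ran f"
  have oD: "openin X D" and oR: "openin X R" and hm: "homeomorphic_map (subtopology X D) (subtopology X R) h"
    using f unfolding Gamma_def h_def D_def R_def by auto
  obtain g where hg: "homeomorphic_maps (subtopology X D) (subtopology X R) h g"
    using hm homeomorphic_map_maps by blast
  have ch: "continuous_map (subtopology X D) (subtopology X R) h"
    and cg: "continuous_map (subtopology X R) (subtopology X D) g"
    and gh: "\<And>x. x \<in> topspace X \<inter> D \<Longrightarrow> g (h x) = x"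
    and hg2: "\<And>y. y \<in> topspace X \<inter> R \<Longrightarrow> h (g y) = y"
    using hg unfolding homeomorphic_maps_def by auto
  let ?Z = "vietoris X"
  have tsD: "topspace (subtopology ?Z (plusK X D)) = plusK X D"
    and tsR: "topspace (subtopology ?Z (plusK X R)) = plusK X R"
    by (auto simp: topspace_vietoris plusK_def)
  have H: "homeomorphic_maps (subtopology ?Z (plusK X D)) (subtopology ?Z (plusK X R)) (image h) (image g)"
    unfolding homeomorphic_maps_def
  proof (intro conjI ballI)
    show "continuous_map (subtopology ?Z (plusK X D)) (subtopology ?Z (plusK X R)) (image h)"
      using hyp_cont[OF oD oR ch] .
    show "continuous_map (subtopology ?Z (plusK X R)) (subtopology ?Z (plusK X D)) (image g)"
      using hyp_cont[OF oR oD cg] .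
  next
    fix A assume "A \<in> topspace (subtopology ?Z (plusK X D))"
    then have "A \<in> plusK X D" using tsD by simp
    then have "A \<subseteq> topspace X \<inter> D" using Kset_sub[of A X] by (auto simp: plusK_def)
    then show "g ` h ` A = A" using gh by (force simp: image_image)
  next
    fix A assume "A \<in> topspace (subtopology ?Z (plusK X R))"
    then have "A \<in> plusK X R" using tsR by simp
    then have "A \<subseteq> topspace X \<inter> R" using Kset_sub[of A X] by (auto simp: plusK_def)
    then show "h ` g ` A = A" using hg2 by (force simp: image_image)
  qed
  have sf: "hyper_sigma X f A = (if A \<in> plusK X D then Some (h ` A) else None)" for A
    using False by (simp add: hs_apply plusK_def h_def D_def)
  have domS: "dom (hyper_sigma X f) = plusK X D"
    using sf by (auto simp: dom_def)
  have "image h ` plusK X D = plusK X R"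
    using homeomorphic_imp_surjective_map[OF homeomorphic_maps_imp_map[OF H]] tsD tsR by simp
  moreover have "ran (hyper_sigma X f) = image h ` plusK X D"
  proof (intro equalityI subsetI)
    fix B assume "B \<in> ran (hyper_sigma X f)"
    then obtain A where "hyper_sigma X f A = Some B" by (auto simp: ran_def)
    then show "B \<in> image h ` plusK X D" using sf[of A] by (auto split: if_splits)
  next
    fix B assume "B \<in> image h ` plusK X D"
    then obtain A where "A \<in> plusK X D" "B = h ` A" by auto
    then show "B \<in> ran (hyper_sigma X f)" using sf[of A] by (auto simp: ran_def)
  qed
  ultimately have ranS: "ran (hyper_sigma X f) = plusK X R" by simp
  have "homeomorphic_map (subtopology ?Z (plusK X D)) (subtopology ?Z (plusK X R))
          (\<lambda>A. the (hyper_sigma X f A))"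
    using homeomorphic_maps_imp_map[OF H] by (rule homeomorphic_map_eq) (simp add: sf tsD)
  then show ?thesis
    unfolding Gamma_def using domS ranS openin_plusK[OF oD] openin_plusK[OF oR] by simp
qed

lemma sigma_comp:
  assumes psi: "\<psi> \<in> Gamma X" and phi: "\<phi> \<in> Gamma X"
  shows "hyper_sigma X (\<psi> \<circ>\<^sub>m \<phi>) = hyper_sigma X \<psi> \<circ>\<^sub>m hyper_sigma X \<phi>"
proof
  fix A
  define h where "h = (\<lambda>x. the (\<phi> x))"
  define k where "k = (\<lambda>x. the (\<psi> x))"
  have phx: "\<And>x. x \<in> dom \<phi> \<Longrightarrow> \<phi> x = Some (h x)" by (auto simp: h_def)
  have psx: "\<And>x. x \<in> dom \<psi> \<Longrightarrow> \<psi> x = Some (k x)" by (auto simp: k_def)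
  have cmp: "\<And>x. x \<in> dom \<phi> \<Longrightarrow> (\<psi> \<circ>\<^sub>m \<phi>) x = \<psi> (h x)" using phx by (simp add: map_comp_def)
  have domc: "dom (\<psi> \<circ>\<^sub>m \<phi>) = {x \<in> dom \<phi>. h x \<in> dom \<psi>}"
    by (auto simp: map_comp_def h_def dom_def split: option.splits)
  show "hyper_sigma X (\<psi> \<circ>\<^sub>m \<phi>) A = (hyper_sigma X \<psi> \<circ>\<^sub>m hyper_sigma X \<phi>) A"
  proof (cases "\<phi> = Map.empty \<or> A \<notin> Kset X \<or> \<not> A \<subseteq> dom \<phi>")
    case True
    then have "hyper_sigma X \<phi> A = None" by (auto simp: hs_apply)
    moreover have "hyper_sigma X (\<psi> \<circ>\<^sub>m \<phi>) A = None"
      using True domc by (auto simp: hs_apply)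
    ultimately show ?thesis by simp
  next
    case False
    then have A: "A \<in> Kset X" "A \<subseteq> dom \<phi>" and ne: "\<phi> \<noteq> Map.empty" by auto
    have B: "h ` A \<in> Kset X" using img_Kset[OF Gamma_cont[OF phi] A] by (simp add: h_def)
    have s1: "hyper_sigma X \<phi> A = Some (h ` A)" using A ne by (simp add: hs_apply h_def)
    have Ane: "A \<noteq> {}" using A by (simp add: Kset_def)
    have eqv: "A \<subseteq> dom (\<psi> \<circ>\<^sub>m \<phi>) \<longleftrightarrow> h ` A \<subseteq> dom \<psi>" using domc A by auto
    show ?thesis
    proof (cases "h ` A \<subseteq> dom \<psi>")
      case True
      then have "\<psi> \<noteq> Map.empty" using Ane by auto
      moreover have "\<psi> \<circ>\<^sub>m \<phi> \<noteq> Map.empty"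
      proof
        assume "\<psi> \<circ>\<^sub>m \<phi> = Map.empty"
        then have "dom (\<psi> \<circ>\<^sub>m \<phi>) = {}" by simp
        then show False using eqv True Ane by auto
      qed
      moreover have "(\<lambda>x. the ((\<psi> \<circ>\<^sub>m \<phi>) x)) ` A = k ` h ` A"
      proof -
        have "(\<lambda>x. the ((\<psi> \<circ>\<^sub>m \<phi>) x)) ` A = (\<lambda>x. k (h x)) ` A"
          by (rule image_cong[OF refl]) (metis A(2) cmp k_def subsetD)
        then show ?thesis by (simp add: image_image)
      qed
      ultimately show ?thesis using True eqv A B s1 by (simp add: hs_apply k_def)
    next
      case False
      then show ?thesis using eqv s1 A by (simp add: hs_apply)
    qed
  qed
qed

lemma sing_embedding: "embedding_map X (vietoris X) (\<lambda>x. {x})"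
proof -
  let ?Z = "vietoris X"
  define S where "S = (\<lambda>x. {x}) ` topspace X"
  have tsS: "topspace (subtopology ?Z S) = S"
    by (auto simp: topspace_vietoris S_def Kset_def)
  have c1: "continuous_map X ?Z (\<lambda>x. {x})"
    unfolding vietoris_def
  proof (rule continuous_on_generated_topo)
    fix s assume "s \<in> vietoris_subbasis X"
    then show "openin X ((\<lambda>x. {x}) -` s \<inter> topspace X)"
    proof (cases rule: subbasis_cases)
      case (1 W)
      then have "(\<lambda>x. {x}) -` s \<inter> topspace X = W" using openin_subset[OF 1(1)]
        by (auto simp: minusK_def Kset_def)
      then show ?thesis using 1 by simp
    next
      case (2 W)
      then have "(\<lambda>x. {x}) -` s \<inter> topspace X = W" using openin_subset[OF 2(1)]
        by (auto simp: plusK_def Kset_def)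
      then show ?thesis using 2 by simp
    qed
  next
    show "(\<lambda>x. {x}) ` topspace X \<subseteq> \<Union> (vietoris_subbasis X)"
      using topspace_vietoris[of X] unfolding vietoris_def by (auto simp: Kset_def)
  qed
  have c: "continuous_map X (subtopology ?Z S) (\<lambda>x. {x})"
    using c1 by (auto simp: continuous_map_in_subtopology S_def)
  have g: "continuous_map (subtopology ?Z S) X the_elem"
    unfolding continuous_map_def
  proof (intro conjI allI impI)
    show "the_elem \<in> topspace (subtopology ?Z S) \<rightarrow> topspace X"
      using tsS by (auto simp: S_def)
  next
    fix U assume U: "openin X U"
    have "{x \<in> topspace (subtopology ?Z S). the_elem x \<in> U} = plusK X U \<inter> S"
      using tsS by (auto simp: S_def plusK_def Kset_def)
    then show "openin (subtopology ?Z S) {x \<in> topspace (subtopology ?Z S). the_elem x \<in> U}"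
      using openin_plusK[OF U] openin_subtopology by metis
  qed
  have "homeomorphic_maps X (subtopology ?Z S) (\<lambda>x. {x}) the_elem"
    unfolding homeomorphic_maps_def using c g tsS by (auto simp: S_def)
  then show ?thesis
    unfolding embedding_map_def S_def homeomorphic_map_maps by blast
qed

theorem proposition2p6:
  fixes X :: "'a topology"
  shows "Gamma_embedded X (vietoris X) \<and>
         Gamma_embedding_via X (vietoris X) (hyper_sigma X) (\<lambda>x. {x})"
proof -
  have hom: "semigroup_hom X (vietoris X) (hyper_sigma X)"
    unfolding semigroup_hom_def using sigma_Gamma sigma_comp by blast
  have pt: "\<forall>f\<in>Gamma X. \<forall>x\<in>dom f. {x} \<in> dom (hyper_sigma X f) \<and>
              hyper_sigma X f {x} = Some {the (f x)}"
  proof (intro ballI)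
    fix f x assume f: "f \<in> Gamma X" and x: "x \<in> dom f"
    have "x \<in> topspace X" using f x openin_subset unfolding Gamma_def by blast
    then have "{x} \<in> Kset X" by (simp add: Kset_def)
    moreover have "f \<noteq> Map.empty" using x by auto
    ultimately have "hyper_sigma X f {x} = Some {the (f x)}" using x by (simp add: hs_apply)
    then show "{x} \<in> dom (hyper_sigma X f) \<and> hyper_sigma X f {x} = Some {the (f x)}" by auto
  qed
  have via: "Gamma_embedding_via X (vietoris X) (hyper_sigma X) (\<lambda>x. {x})"
    unfolding Gamma_embedding_via_def using hom sing_embedding pt by blast
  then show ?thesis unfolding Gamma_embedded_def by blast
qed

end
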